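(* Let $a_1,a_2,b,c$ be positive integers with $a_1<a_2<b<c\leq 0.25\,a_1^2b^3$ such that $\{a_1,b,c\}$ and $\{a_2,b,c\}$ are $D(4)$-triples. Then $\{a_1,a_2,b,c\}$ is a $D(4)$-quadruple.
   Context: A $D(4)$-$m$-tuple is a set of $m$ distinct positive integers such that the product of any two distinct elements increased by $4$ is a perfect square ($m=3$: triple, $m=4$: quadruple). *)

theory Defs
  imports Complex_Main
begin

definition is_square :: "nat \<Rightarrow> bool" where
  "is_square n \<longleftrightarrow> (\<exists>k. n = k ^ 2)"

definition D4_tuple :: "nat \<Rightarrow> nat set \<Rightarrow> bool" where
  "D4_tuple m S \<longleftrightarrow> finite S \<and> card S = m \<and> (\<forall>x\<in>S. 0 < x) \<and>
     (\<forall>x\<in>S. \<forall>y\<in>S. x \<noteq> y \<longrightarrow> is_square (x * y + 4))"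

abbreviation D4_triple :: "nat set \<Rightarrow> bool" where
  "D4_triple S \<equiv> D4_tuple 3 S"

abbreviation D4_quadruple :: "nat set \<Rightarrow> bool" where
  "D4_quadruple S \<equiv> D4_tuple 4 S"

end

theory Submission
  imports Defs
begin

lemma pow4: "((x::int)^2)^2 = x^4" by (simp add: power_mult[symmetric])
lemma pow6: "((x::int)^2)^3 = (x^3)^2" by (simp add: power_mult[symmetric] mult.commute)

lemma q_ne1:
  fixes x b c s q :: int
  assumes "x > 0" "x < b" "b < c" "s \<ge> 0" "s^2 = b*c+4"
    "q^2 + x*s*q = x*(b+c-x)+4"
  shows "q \<noteq> 1"
proof
  assume q: "q = 1"
  have "s \<le> c"
  proof (rule ccontr)
    assume "\<not> s \<le> c"
    hence "c + 1 \<le> s" by simp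
    hence "(c+1)^2 \<le> s^2" using assms by (intro power_mono) auto
    moreover have "b*c + 4 < (c+1)^2"
    proof -
      have "b*c \<le> (c-1)*c" using assms by (intro mult_right_mono) auto
      thus ?thesis using assms by (simp add: power2_eq_square algebra_simps)
    qed
    ultimately show False using assms by simp
  qed
  hence pos: "b+c-x-s \<ge> 1" using assms by simp
  have "x*(b+c-x-s) \<ge> x*1" using pos assms by (intro mult_left_mono) auto
  moreover have "x*(b+c-x-s) = -3" using assms(6) q by (simp add: algebra_simps power2_eq_square)
  ultimately show False using assms by simp
qed

lemma q_pos_facts:
  fixes x b c s q :: int
  assumes "x > 0" "x < b" "b < c" "s \<ge> 0" "s^2 = b*c+4" "q > 0"
    "q^2 + x*s*q = x*(b+c-x)+4"
  shows "q \<ge> 2" "x*(b+c-x-s*q) = q^2 - 4" "b+c-x-s*q \<ge> 0"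
proof -
  show q2: "q \<ge> 2" using q_ne1[OF assms(1-5,7)] assms(6) by simp
  show e: "x*(b+c-x-s*q) = q^2 - 4" using assms(7) by (simp add: algebra_simps)
  have "q^2 \<ge> 2^2" using q2 by (intro power_mono) auto
  hence "x*(b+c-x-s*q) \<ge> 0" using e by simp
  thus "b+c-x-s*q \<ge> 0" using assms(1) by (simp add: zero_le_mult_iff)
qed

lemma stepA:
  fixes a1 a2 b c s q1 q2 :: int
  assumes "a1 > 0" "a1 < a2" "a2 < b" "b < c" "s \<ge> 0" "s^2 = b*c+4"
    "q1 > 0" "q2 > 0"
    "q1^2 + a1*s*q1 = a1*(b+c-a1)+4" "q2^2 + a2*s*q2 = a2*(b+c-a2)+4"
  shows "q1 \<le> q2"
proof (rule ccontr)
  assume "\<not> q1 \<le> q2"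
  hence h: "q2 + 1 \<le> q1" by simp
  have e2: "b+c-a2-s*q2 \<ge> 0" using q_pos_facts(3)[of a2 b c s q2] assms by simp
  have "(q2+1)^2 \<le> q1^2" using h assms by (intro power_mono) auto
  moreover have "a1*s*(q2+1) \<le> a1*s*q1" using h assms by (intro mult_left_mono) auto
  ultimately have i: "(q2+1)^2 + a1*s*(q2+1) \<le> a1*(b+c-a1)+4" using assms(9) by linarith
  have "(a2-a1)*(a1 - (b+c-a2-s*q2)) \<ge> 2*q2 + 1 + a1*s"
    using i assms(10) by (simp add: algebra_simps power2_eq_square)
  moreover have "(a2-a1)*(a1 - (b+c-a2-s*q2)) \<le> (a2-a1)*a1"
    using e2 assms by (intro mult_left_mono) auto
  moreover have "(a2-a1)*a1 < s*a1"
  proof -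
    have "b^2 < s^2" using assms by (simp add: power2_eq_square) (smt (verit) mult_strict_left_mono)
    hence "b < s" using assms by (smt (verit) power_mono)
    thus ?thesis using assms by (intro mult_strict_right_mono) auto
  qed
  ultimately show False using assms by (smt (verit) mult.commute mult_nonneg_nonneg)
qed

lemma stepB:
  fixes a1 a2 b c s q1 q2 :: int
  assumes "a1 > 0" "a1 < a2" "a2 < b" "b < c" "s \<ge> 0" "s^2 = b*c+4"
    "q1 > 0" "q2 > 0"
    "q1^2 + a1*s*q1 = a1*(b+c-a1)+4" "q2^2 + a2*s*q2 = a2*(b+c-a2)+4"
    "4*c \<le> a1^2*b^3"
  shows "q2 \<le> q1"
proof (rule ccontr)
  assume "\<not> q2 \<le> q1"
  hence h: "q1 + 1 \<le> q2" by simp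
  have q1ge: "q1 \<ge> 2" using q_pos_facts(1)[of a1 b c s q1] assms by simp
  define N1 where "N1 = a1*(b+c-a1)+4"
  define e1 where "e1 = b+c-a1-s*q1"
  define d where "d = a2 - a1"
  have spos: "s > 0"
  proof -
    have "s \<noteq> 0" using assms by (auto simp: power2_eq_square) (smt (verit) mult_pos_pos)
    thus ?thesis using assms(5) by simp
  qed
  have "3 \<le> q2" using h q1ge by simp
  hence "3^2 + a2*s*3 \<le> a2*(b+c-a2)+4"
  proof -
    assume q3: "3 \<le> q2"
    have "3^2 \<le> q2^2" using q3 by (intro power_mono) auto
    moreover have "a2*s*3 \<le> a2*s*q2" using q3 assms spos by (intro mult_left_mono) auto
    ultimately show ?thesis using assms(10) by linarith
  qed
  moreover have "a2*a2 > 0" using assms by simp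
  ultimately have "a2*(3*s) < a2*(b+c)" by (simp add: algebra_simps)
  hence "3*s < b+c" using mult_less_cancel_left_pos[of a2 "3*s" "b+c"] assms by simp
  hence "(3*s)^2 < (b+c)^2" using spos by (intro power_strict_mono) auto
  hence a9: "9*(b*c+4) < (b+c)^2" using assms(6) by (simp add: power_mult_distrib)
  have c6: "c \<ge> 6*b+1"
  proof (rule ccontr)
    assume "\<not> c \<ge> 6*b+1"
    hence "c \<le> 6*b" by simp
    hence "c*c \<le> c*(6*b)" using assms by (intro mult_left_mono) auto
    moreover have "b*b < c*b" using assms by (intro mult_strict_right_mono) auto
    moreover have "(b+c)^2 = b*b + 2*(c*b) + c*c" by (simp add: power2_eq_square algebra_simps)
    ultimately show False using a9 by (simp add: algebra_simps)
  qed
  have "(q1+1)^2 \<le> q2^2" using h assms by (intro power_mono) auto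
  moreover have "a2*s*(q1+1) \<le> a2*s*q2" using h assms spos by (intro mult_left_mono) auto
  ultimately have i: "(q1+1)^2 + a2*s*(q1+1) \<le> a2*(b+c-a2)+4" using assms(10) by linarith
  have de: "d*e1 > a2*s"
  proof -
    have "d*e1 \<ge> a2*s + d*a2 + 2*q1 + 1"
      using i assms(9) unfolding d_def e1_def by (simp add: algebra_simps power2_eq_square)
    moreover have "d*a2 > 0" using assms unfolding d_def by simp
    ultimately show ?thesis using q1ge by linarith
  qed
  have ae: "a1*e1 = q1^2 - 4" using assms(9) unfolding e1_def by (simp add: algebra_simps)
  have "q1^2 > 0" using q1ge by simp
  hence "a1*s*q1 < N1" using assms(9) unfolding N1_def by linarith
  hence "(a1*s*q1)^2 < N1^2" using assms spos q1ge by (intro power_strict_mono) auto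
  hence e1b: "a1^3*s^2*e1 < N1^2"
  proof -
    assume a: "(a1*s*q1)^2 < N1^2"
    have "a1^3*s^2*e1 = a1^2*s^2*(a1*e1)" by (simp add: power2_eq_square power3_eq_cube)
    also have "\<dots> = a1^2*s^2*(q1^2-4)" using ae by simp
    also have "\<dots> \<le> a1^2*s^2*q1^2" by (simp add: algebra_simps)
    also have "\<dots> = (a1*s*q1)^2" by (simp add: power_mult_distrib)
    finally show ?thesis using a by linarith
  qed
  have N1le: "N1 \<le> a1*(b+c+3)"
  proof -
    have "1*1 \<le> a1*a1" using assms(1) by (intro mult_mono) auto
    hence "4 \<le> a1*a1 + 3*a1" using assms(1) by linarith
    thus ?thesis unfolding N1_def by (simp add: algebra_simps)
  qed
  have N1pos: "N1 \<ge> 0" unfolding N1_def using assms by simp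
  have bc3: "(b+c+3)^2 \<le> a1*s^3"
  proof -
    have "5*(b+c+3) \<le> 7*c" using c6 assms by simp
    hence "(5*(b+c+3))^2 \<le> (7*c)^2" using assms by (intro power_mono) auto
    moreover have "(5*(b+c+3))^2 = 25*(b+c+3)^2" "(7*c)^2 = 49*c^2" by (simp_all add: power2_eq_square algebra_simps)
    moreover have "c^2 > 0" using assms by simp
    ultimately have "(b+c+3)^2 < 2*c^2" by linarith
    hence "((b+c+3)^2)^2 < (2*c^2)^2" by (intro power_strict_mono) auto
    hence A: "(b+c+3)^4 < 4*c^4" by (simp add: power_mult_distrib pow4)
    have "b*c \<le> b*c+4" by simp
    hence B: "(b*c)^3 \<le> (b*c+4)^3" using assms by (intro power_mono) auto
    have "b^3*(b+c+3)^4 \<le> b^3*(4*c^4)" using A assms by (intro mult_left_mono) auto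
    also have "\<dots> = 4*c*(b*c)^3" by (simp add: power_mult_distrib eval_nat_numeral)
    also have "\<dots> \<le> 4*c*(b*c+4)^3" using B assms by (intro mult_left_mono) auto
    also have "\<dots> \<le> a1^2*b^3*(b*c+4)^3" using assms by (intro mult_right_mono) auto
    also have "\<dots> = b^3*(a1^2*(b*c+4)^3)" by simp
    finally have "b^3*(b+c+3)^4 \<le> b^3*(a1^2*(b*c+4)^3)" .
    moreover have "b^3 > 0" using assms by simp
    ultimately have "(b+c+3)^4 \<le> a1^2*(b*c+4)^3"
      using mult_le_cancel_left_pos[of "b^3" "(b+c+3)^4" "a1^2*(b*c+4)^3"] by simp
    also have "\<dots> = a1^2*(s^2)^3" by (simp only: assms(6))
    also have "\<dots> = (a1*s^3)^2" by (simp add: power_mult_distrib pow6)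
    finally have "((b+c+3)^2)^2 \<le> (a1*s^3)^2" by (simp only: pow4)
    moreover have "0 \<le> a1*s^3" using assms(1) spos by simp
    ultimately show ?thesis by (rule power2_le_imp_le)
  qed
  have "d*N1^2 \<le> d*(a1*(b+c+3))^2"
  proof -
    have "N1^2 \<le> (a1*(b+c+3))^2" using N1le N1pos by (intro power_mono) auto
    thus ?thesis using assms unfolding d_def by (intro mult_left_mono) auto
  qed
  also have "\<dots> \<le> a2*(a1*(b+c+3))^2" using assms unfolding d_def by (intro mult_right_mono) auto
  also have "\<dots> = a2*a1^2*(b+c+3)^2" by (simp add: power_mult_distrib)
  also have "\<dots> \<le> a2*a1^2*(a1*s^3)" using bc3 assms by (intro mult_left_mono) auto
  finally have dN: "d*N1^2 \<le> a2*a1^2*(a1*s^3)" .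
  have "d*(a1^3*s^2*e1) < d*N1^2"
  proof (rule mult_strict_left_mono[OF e1b])
    show "0 < d" using assms(2) unfolding d_def by simp
  qed
  moreover have "a1^3*s^2*(a2*s) < a1^3*s^2*(d*e1)"
  proof (rule mult_strict_left_mono[OF de])
    show "0 < a1^3*s^2" using assms(1) spos by simp
  qed
  moreover have "a1^3*s^2*(a2*s) = a2*a1^2*(a1*s^3)" by (simp add: power2_eq_square power3_eq_cube)
  moreover have "d*(a1^3*s^2*e1) = a1^3*s^2*(d*e1)" by simp
  ultimately show False using dN by linarith
qed


lemma qexist:
  fixes x b c r t s :: int
  assumes "x > 0" "x < b" "b < c" "r \<ge> 0" "t \<ge> 0" "s \<ge> 0"
    "r^2 = x*b+4" "t^2 = x*c+4" "s^2 = b*c+4"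
  shows "\<exists>q>0. q^2 + x*s*q = x*(b+c-x)+4"
proof -
  define Q where "Q = r*t - x*s"
  define N where "N = x*(b+c-x)+4"
  have "(Q + x*s)^2 = (r*t)^2" unfolding Q_def by simp
  also have "\<dots> = (x*b+4)*(x*c+4)" using assms(7,8) by (simp add: power_mult_distrib)
  finally have E: "Q^2 + 2*x*s*Q + x^2*s^2 = (x*b+4)*(x*c+4)" by (simp add: power2_eq_square algebra_simps)
  have "Q*(Q+2*x*s) = (x*b+4)*(x*c+4) - x^2*s^2" using E by (simp add: power2_eq_square algebra_simps)
  also have "\<dots> = (x*b+4)*(x*c+4) - x^2*(b*c+4)" using assms(9) by simp
  also have "\<dots> = 4*N" unfolding N_def by (simp add: power2_eq_square algebra_simps)
  finally have QQ: "Q*(Q+2*x*s) = 4*N" .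
  have "x*(b+c-x) > 0" using assms by (intro mult_pos_pos) auto
  hence Npos: "N > 0" unfolding N_def by simp
  have "even Q"
  proof (rule ccontr)
    assume "odd Q"
    hence "odd (Q+2*x*s)" by simp
    hence "odd (Q*(Q+2*x*s))" using \<open>odd Q\<close> by simp
    thus False using QQ by simp
  qed
  then obtain q where Qq: "Q = 2*q" by (auto elim: evenE)
  have xs: "x*s \<ge> 0" using assms by simp
  have Qpos: "Q > 0"
  proof (rule ccontr)
    assume "\<not> Q > 0"
    hence "Q \<le> 0" by simp
    moreover have "Q + 2*x*s \<ge> 0" unfolding Q_def using assms xs by simp
    ultimately have "Q*(Q+2*x*s) \<le> 0" by (simp add: mult_nonpos_nonneg)
    thus False using QQ Npos by simp
  qed
  have "q > 0" using Qpos Qq by simp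
  moreover have "q^2 + x*s*q = N" using QQ Qq by (simp add: power2_eq_square algebra_simps)
  ultimately show ?thesis unfolding N_def by blast
qed

lemma final_arith:
  fixes a1 a2 b c s q1 q2 :: int
  assumes "a1 > 0" "a1 < a2" "a2 < b" "b < c" "s \<ge> 0" "s^2 = b*c+4"
    "q1 > 0" "q2 > 0"
    "q1^2 + a1*s*q1 = a1*(b+c-a1)+4" "q2^2 + a2*s*q2 = a2*(b+c-a2)+4"
    "4*c \<le> a1^2*b^3"
  shows "a1*a2 + 4 = q1^2"
proof -
  have "q1 = q2" using stepA[OF assms(1-10)] stepB[OF assms] by simp
  define M where "M = b+c-s*q1"
  have e1: "a1*(M-a1) = q1^2-4" using assms(9) unfolding M_def by (simp add: algebra_simps)
  have e2: "a2*(M-a2) = q1^2-4" using assms(10) \<open>q1 = q2\<close> unfolding M_def by (simp add: algebra_simps)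
  have "(a2-a1)*(a1+a2-M) = 0" using e1 e2 by (simp add: algebra_simps)
  hence "M = a1+a2" using assms(2) by simp
  thus ?thesis using e1 by (simp add: algebra_simps)
qed

lemma sq_get: "is_square n \<Longrightarrow> \<exists>k::nat. n = k^2" unfolding is_square_def by simp

theorem mainTheorem12:
  fixes a1 a2 b c :: nat
  assumes "0 < a1" and "a1 < a2" and "a2 < b" and "b < c"
    and "real c \<le> 0.25 * real a1 ^ 2 * real b ^ 3"
    and "D4_triple {a1, b, c}" and "D4_triple {a2, b, c}"
  shows "D4_quadruple {a1, a2, b, c}"
proof -
  have T1: "\<And>x y. x \<in> {a1,b,c} \<Longrightarrow> y \<in> {a1,b,c} \<Longrightarrow> x \<noteq> y \<Longrightarrow> is_square (x*y+4)"
    using assms(6) unfolding D4_tuple_def by blast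
  have T2: "\<And>x y. x \<in> {a2,b,c} \<Longrightarrow> y \<in> {a2,b,c} \<Longrightarrow> x \<noteq> y \<Longrightarrow> is_square (x*y+4)"
    using assms(7) unfolding D4_tuple_def by blast
  have s1: "is_square (a1*b+4)" using T1[of a1 b] assms by simp
  have s2: "is_square (a1*c+4)" using T1[of a1 c] assms by simp
  have s3: "is_square (b*c+4)" using T1[of b c] assms by simp
  have s4: "is_square (a2*b+4)" using T2[of a2 b] assms by simp
  have s5: "is_square (a2*c+4)" using T2[of a2 c] assms by simp
  obtain r1 where r1: "a1*b+4 = r1^2" using sq_get[OF s1] by blast
  obtain t1 where t1: "a1*c+4 = t1^2" using sq_get[OF s2] by blast
  obtain s where s: "b*c+4 = s^2" using sq_get[OF s3] by blast
  obtain r2 where r2: "a2*b+4 = r2^2" using sq_get[OF s4] by blast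
  obtain t2 where t2: "a2*c+4 = t2^2" using sq_get[OF s5] by blast
  have ir1: "(int r1)^2 = int a1 * int b + 4" using arg_cong[OF r1, of int] by simp
  have it1: "(int t1)^2 = int a1 * int c + 4" using arg_cong[OF t1, of int] by simp
  have iss: "(int s)^2 = int b * int c + 4" using arg_cong[OF s, of int] by simp
  have ir2: "(int r2)^2 = int a2 * int b + 4" using arg_cong[OF r2, of int] by simp
  have it2: "(int t2)^2 = int a2 * int c + 4" using arg_cong[OF t2, of int] by simp
  obtain q1 where q1: "q1 > 0" "q1^2 + int a1*int s*q1 = int a1*(int b+int c-int a1)+4"
    using qexist[of "int a1" "int b" "int c" "int r1" "int t1" "int s"] assms ir1 it1 iss by auto
  obtain q2 where q2: "q2 > 0" "q2^2 + int a2*int s*q2 = int a2*(int b+int c-int a2)+4"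
    using qexist[of "int a2" "int b" "int c" "int r2" "int t2" "int s"] assms ir2 it2 iss by auto
  have "real (4*c) \<le> real (a1^2*b^3)" using assms(5) by simp
  hence "4*c \<le> a1^2*b^3" by (simp only: of_nat_le_iff)
  hence c4: "4*int c \<le> (int a1)^2*(int b)^3" by (metis of_nat_le_iff of_nat_mult of_nat_numeral of_nat_power)
  have "int a1 * int a2 + 4 = q1^2"
    using final_arith[of "int a1" "int a2" "int b" "int c" "int s" q1 q2] assms q1 q2 iss c4 by simp
  hence "int (a1*a2+4) = int ((nat q1)^2)" using q1(1) by simp
  hence s6: "is_square (a1*a2+4)" unfolding is_square_def by (simp only: of_nat_eq_iff) blast
  have card: "card {a1,a2,b,c} = 4" using assms(1-4) by simp
  have pos: "\<forall>x\<in>{a1,a2,b,c}. 0 < x" using assms(1-4) by auto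
  have sqall: "\<forall>x\<in>{a1,a2,b,c}. \<forall>y\<in>{a1,a2,b,c}. x \<noteq> y \<longrightarrow> is_square (x*y+4)"
    using s1 s2 s3 s4 s5 s6 by (auto simp: mult.commute)
  show ?thesis unfolding D4_tuple_def using card pos sqall by simp
qed

end
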